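(* Let $s\ge 2$ and $t\ge 2$ be integers, $p=st$, and let $\xi_1,\dots,\xi_s$ be positive integers with $\binom{p-t}{(r-1)t+1}\xi_r=\binom{p-t}{rt}\xi_{r+1}$ for $2\le r\le s-1$ and $(s-1)\xi_1=\binom{p-t}{t}\xi_2$. Let $\mathcal{C}$ be the array code (over a finite field $\mathbb{F}$, with $t$ rows, entries in $\mathbb{F}^p$ with basis $x_1,\dots,x_p$) whose columns are: (Type $T_1$) for each $t$-subset $A\subseteq\{1,\dots,p\}$, $\xi_1$ columns with cells $x_a$, $a\in A$; and (Type $T_r$, for each $2\le r\le s$) for each $(t-1)$-subset $B\subseteq\{1,\dots,p\}$ and each $((r-1)t+1)$-subset $C\subseteq\{1,\dots,p\}\setminus B$, $\xi_r$ columns whose cells are $x_b$ for $b\in B$ together with one cell $\sum_{c\in C}x_c$. Let $m$ be the number of columns of $\mathcal{C}$. Then $\mathcal{C}$ is a $[t\times m,p]$ $k$-PIR array code with PIR rate $k/m=(\beta+\gamma)/(\beta+2\gamma)$, where \[ \beta=\xi_1(p-t+1)+\sum_{r=2}^{s}(t-1)\xi_r\binom{p-t+1}{(r-1)t+1},\qquad \gamma=(p-t+1)\sum_{r=1}^{s-1}\xi_{r+1}\binom{p-t}{rt}. \]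
   Context: A $[t\times m,p]$ array code is a $t\times m$ array whose entries are linear combinations of a basis $x_1,\dots,x_p$ of $\mathbb{F}^p$. It has the $k$-PIR property (is a $k$-PIR array code) if for every $i$ there exist $k$ pairwise disjoint sets $S_1,\dots,S_k$ of columns such that for each $j$ the vector $x_i$ lies in the span of all entries of the columns in $S_j$. Its PIR rate is $k/m$. *)

theory Defs
  imports Complex_Main "HOL-Library.Multiset"
begin

text \<open>Vectors of F^p are modelled as functions nat => F; only the coordinates
  1..p are used. The basis vector x_a is the indicator of coordinate a.\<close>

definition basis_vec :: "nat \<Rightarrow> (nat \<Rightarrow> 'a::field)" where
  "basis_vec a = (\<lambda>i. if i = a then 1 else 0)"

definition lin_span :: "(nat \<Rightarrow> 'a::field) set \<Rightarrow> (nat \<Rightarrow> 'a) set" where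
  "lin_span S = {v. \<exists>T c. finite T \<and> T \<subseteq> S \<and> v = (\<lambda>i. \<Sum>u\<in>T. c u * u i)}"

text \<open>An array code is a list of columns; each column is the list of its cells
  (top to bottom). The k-PIR property for message length p.\<close>
definition is_kPIR :: "nat \<Rightarrow> (nat \<Rightarrow> 'a::field) list list \<Rightarrow> nat \<Rightarrow> bool" where
  "is_kPIR p cols k \<longleftrightarrow>
     (\<forall>i\<in>{1..p}. \<exists>S :: nat \<Rightarrow> nat set.
        (\<forall>j<k. S j \<subseteq> {..<length cols}) \<and>
        (\<forall>j<k. \<forall>j'<k. j \<noteq> j' \<longrightarrow> S j \<inter> S j' = {}) \<and>
        (\<forall>j<k. basis_vec i \<in> lin_span (\<Union>c\<in>S j. set (cols ! c))))"

definition is_array_code :: "nat \<Rightarrow> nat \<Rightarrow> (nat \<Rightarrow> 'a::field) list list \<Rightarrow> bool" where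
  "is_array_code t p cols \<longleftrightarrow>
     (\<forall>col\<in>set cols. length col = t \<and> (\<forall>v\<in>set col. \<forall>i. i \<notin> {1..p} \<longrightarrow> v i = 0))"

definition theorem8_columns ::
  "nat \<Rightarrow> nat \<Rightarrow> (nat \<Rightarrow> nat) \<Rightarrow> (nat \<Rightarrow> 'a::field) list multiset" where
  "theorem8_columns s t \<xi> =
     (let p = s * t in
      (\<Sum>A\<in>{A. A \<subseteq> {1..p} \<and> card A = t}.
          replicate_mset (\<xi> 1) (map basis_vec (sorted_list_of_set A)))
    + (\<Sum>r\<in>{2..s}. \<Sum>B\<in>{B. B \<subseteq> {1..p} \<and> card B = t - 1}.
         \<Sum>C\<in>{C. C \<subseteq> {1..p} - B \<and> card C = (r - 1) * t + 1}.
          replicate_mset (\<xi> r)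
            (map basis_vec (sorted_list_of_set B) @
               [(\<lambda>i. \<Sum>c\<in>C. basis_vec c i)])))"

end

theory Submission
  imports Defs
begin


definition sumvec :: "nat set \<Rightarrow> nat \<Rightarrow> 'a::field" where
  "sumvec C = (\<lambda>i. \<Sum>c\<in>C. basis_vec c i)"

lemma span_base: "v \<in> S \<Longrightarrow> v \<in> lin_span S"
  unfolding lin_span_def
  by (rule CollectI, rule exI[of _ "{v}"], rule exI[of _ "\<lambda>_. 1"]) auto

lemma span_zero: "(\<lambda>i. 0) \<in> lin_span S"
  unfolding lin_span_def
  by (rule CollectI, rule exI[of _ "{}"]) auto

lemma span_add:
  assumes "u \<in> lin_span S" "v \<in> lin_span S"
  shows "(\<lambda>i. u i + v i) \<in> lin_span S"
proof -
  obtain T1 c1 where 1: "finite T1" "T1 \<subseteq> S" "u = (\<lambda>i. \<Sum>w\<in>T1. c1 w * w i)"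
    using assms(1) unfolding lin_span_def by blast
  obtain T2 c2 where 2: "finite T2" "T2 \<subseteq> S" "v = (\<lambda>i. \<Sum>w\<in>T2. c2 w * w i)"
    using assms(2) unfolding lin_span_def by blast
  define c where "c w = (if w \<in> T1 then c1 w else 0) + (if w \<in> T2 then c2 w else 0)" for w
  have "(\<lambda>i. u i + v i) = (\<lambda>i. \<Sum>w\<in>T1 \<union> T2. c w * w i)"
  proof
    fix i
    have a: "(\<Sum>w\<in>T1 \<union> T2. (if w \<in> T1 then c1 w else 0) * w i) = (\<Sum>w\<in>T1. c1 w * w i)"
      by (rule sum.mono_neutral_cong_right) (use 1 2 in auto)
    have b: "(\<Sum>w\<in>T1 \<union> T2. (if w \<in> T2 then c2 w else 0) * w i) = (\<Sum>w\<in>T2. c2 w * w i)"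
      by (rule sum.mono_neutral_cong_right) (use 1 2 in auto)
    show "u i + v i = (\<Sum>w\<in>T1 \<union> T2. c w * w i)"
      unfolding c_def distrib_right sum.distrib a b using 1 2 by simp
  qed
  then show ?thesis unfolding lin_span_def using 1 2 by blast
qed

lemma span_scale:
  assumes "u \<in> lin_span S"
  shows "(\<lambda>i. a * u i) \<in> lin_span S"
proof -
  obtain T1 c1 where 1: "finite T1" "T1 \<subseteq> S" "u = (\<lambda>i. \<Sum>w\<in>T1. c1 w * w i)"
    using assms(1) unfolding lin_span_def by blast
  have "(\<lambda>i. a * u i) = (\<lambda>i. \<Sum>w\<in>T1. (a * c1 w) * w i)"
    unfolding 1(3) sum_distrib_left by (simp only: mult.assoc)
  then show ?thesis unfolding lin_span_def using 1(1,2)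
    by (intro CollectI exI[of _ T1] exI[of _ "\<lambda>w. a * c1 w"]) simp
qed

lemma span_diff:
  assumes "u \<in> lin_span S" "v \<in> lin_span S"
  shows "(\<lambda>i. u i - v i) \<in> lin_span S"
  using span_add[OF assms(1) span_scale[OF assms(2), of "-1"]] by simp

lemma span_sum:
  assumes "finite X" "\<And>x. x \<in> X \<Longrightarrow> f x \<in> lin_span S"
  shows "(\<lambda>i. \<Sum>x\<in>X. f x i) \<in> lin_span S"
  using assms
proof (induction X rule: finite_induct)
  case empty then show ?case using span_zero by simp
next
  case (insert x F)
  then show ?case using span_add[of "f x" S "\<lambda>i. \<Sum>x\<in>F. f x i"] by simp
qed

lemma span_mono: "S \<subseteq> S' \<Longrightarrow> lin_span S \<subseteq> lin_span S'"
  unfolding lin_span_def by blast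

lemma sumvec_basis_span:
  assumes "finite C" "basis_vec ` C \<subseteq> S"
  shows "(sumvec C :: nat \<Rightarrow> 'a::field) \<in> lin_span S"
  unfolding sumvec_def using assms by (intro span_sum) (auto intro: span_base)

lemma sumvec_insert:
  "finite C \<Longrightarrow> i \<notin> C \<Longrightarrow> sumvec (insert i C) = (\<lambda>x. basis_vec i x + (sumvec C x :: 'a::field))"
  unfolding sumvec_def by simp

lemma sumvec_Un:
  "finite B \<Longrightarrow> finite C \<Longrightarrow> B \<inter> C = {} \<Longrightarrow> sumvec (B \<union> C) = (\<lambda>x. sumvec B x + (sumvec C x :: 'a::field))"
  unfolding sumvec_def by (simp add: sum.union_disjoint)

lemma sumvec_val: "finite C \<Longrightarrow> (sumvec C x :: 'a::field) = (if x \<in> C then 1 else 0)"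
  unfolding sumvec_def basis_vec_def by (simp add: sum.delta)

lemma basis_vec_inj: "basis_vec a = (basis_vec b :: nat \<Rightarrow> 'a::field) \<longleftrightarrow> a = b"
  unfolding basis_vec_def by (metis zero_neq_one)

lemma sumvec_inj:
  assumes "finite C" "finite C'" "sumvec C = (sumvec C' :: nat \<Rightarrow> 'a::field)"
  shows "C = C'"
proof -
  have "x \<in> C \<longleftrightarrow> x \<in> C'" for x
  proof -
    have e: "(if x \<in> C then 1 else 0) = (if x \<in> C' then (1::'a) else 0)"
      using fun_cong[OF assms(3), of x] by (simp add: sumvec_val assms(1,2))
    then show ?thesis by (simp split: if_splits)
  qed
  then show ?thesis by blast
qed

lemma sumvec_not_basis:
  assumes "finite C" "a \<in> C" "b \<in> C" "a \<noteq> b"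
  shows "sumvec C \<noteq> (basis_vec x :: nat \<Rightarrow> 'a::field)"
  by (metis assms basis_vec_def sumvec_val zero_neq_one)

lemma pir_from_family:
  fixes cols :: "(nat \<Rightarrow> 'a::field) list list"
  assumes "finite F" "\<forall>X\<in>F. X \<subseteq> {..<length cols}"
    "\<forall>X\<in>F. \<forall>Y\<in>F. X \<noteq> Y \<longrightarrow> X \<inter> Y = {}"
    "\<forall>X\<in>F. basis_vec i \<in> lin_span (\<Union>c\<in>X. set (cols ! c))"
    "k \<le> card F"
  shows "\<exists>S :: nat \<Rightarrow> nat set.
        (\<forall>j<k. S j \<subseteq> {..<length cols}) \<and>
        (\<forall>j<k. \<forall>j'<k. j \<noteq> j' \<longrightarrow> S j \<inter> S j' = {}) \<and>
        (\<forall>j<k. basis_vec i \<in> lin_span (\<Union>c\<in>S j. set (cols ! c)))"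
proof -
  obtain h where h: "bij_betw h {0..<card F} F" using ex_bij_betw_nat_finite[OF assms(1)] by blast
  have hF: "j < k \<Longrightarrow> h j \<in> F" for j using h assms(5) unfolding bij_betw_def by auto
  have hi: "j < k \<Longrightarrow> j' < k \<Longrightarrow> j \<noteq> j' \<Longrightarrow> h j \<noteq> h j'" for j j'
    using h assms(5) unfolding bij_betw_def inj_on_def by auto
  have 1: "\<forall>j<k. h j \<subseteq> {..<length cols}" using hF assms(2) by blast
  have 2: "\<forall>j<k. \<forall>j'<k. j \<noteq> j' \<longrightarrow> h j \<inter> h j' = {}"
  proof (intro allI impI)
    fix j j' assume "j < k" "j' < k" "j \<noteq> j'"
    then show "h j \<inter> h j' = {}" using hF hi assms(3) by metis
  qed
  have 3: "\<forall>j<k. basis_vec i \<in> lin_span (\<Union>c\<in>h j. set (cols ! c))" using hF assms(4) by blast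
  show ?thesis using 1 2 3 by blast
qed

lemma fiber_bij:
  assumes "finite L" "finite U" "\<And>x. card {a\<in>L. f a = x} = card {b\<in>U. g b = x}"
  shows "\<exists>h. bij_betw h L U \<and> (\<forall>a\<in>L. g (h a) = f a)"
proof -
  have ex: "\<exists>hx. bij_betw hx {a\<in>L. f a = x} {b\<in>U. g b = x}" for x
    by (rule finite_same_card_bij) (use assms in auto)
  obtain H where H0: "\<forall>x. bij_betw (H x) {a\<in>L. f a = x} {b\<in>U. g b = x}"
    using choice[of "\<lambda>x hx. bij_betw hx {a\<in>L. f a = x} {b\<in>U. g b = x}"] ex by blast
  have H: "bij_betw (H x) {a\<in>L. f a = x} {b\<in>U. g b = x}" for x using H0 by blast
  define h where "h a = H (f a) a" for a
  have 1: "a \<in> L \<Longrightarrow> h a \<in> U \<and> g (h a) = f a" for a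
    using H[of "f a"] unfolding h_def bij_betw_def by auto
  have "inj_on h L"
  proof (rule inj_onI)
    fix a a' assume a: "a \<in> L" "a' \<in> L" "h a = h a'"
    then have fa: "f a = f a'" using 1 by metis
    have inj: "inj_on (H (f a)) {x\<in>L. f x = f a}" using H[of "f a"] unfolding bij_betw_def by blast
    have e: "H (f a) a = H (f a) a'" using a(3) fa unfolding h_def by simp
    have "a \<in> {x\<in>L. f x = f a}" "a' \<in> {x\<in>L. f x = f a}" using a fa by auto
    then show "a = a'" using inj_onD[OF inj e] by blast
  qed
  moreover have "h ` L = U"
  proof
    show "h ` L \<subseteq> U" using 1 by auto
    show "U \<subseteq> h ` L"
    proof
      fix b assume b: "b \<in> U"
      then have "b \<in> H (g b) ` {a\<in>L. f a = g b}" using H[of "g b"] unfolding bij_betw_def by auto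
      then obtain a where a: "a \<in> L" "f a = g b" "b = H (g b) a" by blast
      then have "b = h a" unfolding h_def by simp
      then show "b \<in> h ` L" using a by blast
    qed
  qed
  ultimately show ?thesis using 1 unfolding bij_betw_def by blast
qed

lemma count_eq_card: "count (mset xs) v = card {c. c < length xs \<and> xs ! c = v}"
  by (simp add: count_mset count_list_eq_length_filter length_filter_conv_card eq_commute)

lemma card_sub_in:
  assumes "finite X" "i \<in> X"
  shows "card {A. A \<subseteq> X \<and> card A = Suc k \<and> i \<in> A} = (card X - 1) choose k"
proof -
  have "{A. A \<subseteq> X \<and> card A = Suc k \<and> i \<in> A} = insert i ` {A. A \<subseteq> X - {i} \<and> card A = k}"
  proof (rule set_eqI, rule iffI)
    fix A assume A: "A \<in> {A. A \<subseteq> X \<and> card A = Suc k \<and> i \<in> A}"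
    then have "A - {i} \<in> {A. A \<subseteq> X - {i} \<and> card A = k}" using assms(1)
      by (auto simp: finite_subset)
    moreover have "A = insert i (A - {i})" using A by auto
    ultimately show "A \<in> insert i ` {A. A \<subseteq> X - {i} \<and> card A = k}" by blast
  next
    fix A assume "A \<in> insert i ` {A. A \<subseteq> X - {i} \<and> card A = k}"
    then obtain A' where A': "A = insert i A'" "A' \<subseteq> X - {i}" "card A' = k" by auto
    then have "finite A'" "i \<notin> A'" using assms finite_subset[of A' X] by auto
    then show "A \<in> {A. A \<subseteq> X \<and> card A = Suc k \<and> i \<in> A}" using assms A'
      by auto
  qed
  moreover have "inj_on (insert i) {A. A \<subseteq> X - {i} \<and> card A = k}"
    by (rule inj_onI) blast
  ultimately show ?thesis using assms by (simp add: card_image n_subsets)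
qed

lemma card_sub_notin:
  assumes "finite X" "i \<in> X"
  shows "card {A. A \<subseteq> X \<and> card A = k \<and> i \<notin> A} = (card X - 1) choose k"
proof -
  have "{A. A \<subseteq> X \<and> card A = k \<and> i \<notin> A} = {A. A \<subseteq> X - {i} \<and> card A = k}" by auto
  then show ?thesis using assms by (simp add: n_subsets)
qed

lemma sum_if_const: "finite X \<Longrightarrow> (\<Sum>x\<in>X. if P x then (c::nat) else 0) = card {x\<in>X. P x} * c"
  using sum.inter_filter[of X "\<lambda>_. c" P] by simp



definition col1 :: "nat set \<Rightarrow> (nat \<Rightarrow> 'a::field) list" where
  "col1 A = map basis_vec (sorted_list_of_set A)"
definition colr :: "nat set \<Rightarrow> nat set \<Rightarrow> (nat \<Rightarrow> 'a::field) list" where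
  "colr B C = map basis_vec (sorted_list_of_set B) @ [sumvec C]"
definition colof :: "nat \<times> nat set \<times> nat set \<Rightarrow> (nat \<Rightarrow> 'a::field) list" where
  "colof d = (case d of (r, B, C) \<Rightarrow> if r = 1 then col1 C else colr B C)"

lemma set_col1: "finite A \<Longrightarrow> set (col1 A) = basis_vec ` A"
  unfolding col1_def by simp
lemma set_colr: "finite B \<Longrightarrow> set (colr B C) = insert (sumvec C) (basis_vec ` B)"
  unfolding colr_def by auto
lemma length_col1: "finite A \<Longrightarrow> length (col1 A) = card A"
  unfolding col1_def by simp
lemma length_colr: "finite B \<Longrightarrow> length (colr B C) = Suc (card B)"
  unfolding colr_def by simp

lemma basis_inj_on: "inj (basis_vec :: nat \<Rightarrow> nat \<Rightarrow> 'a::field)"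
  by (rule injI) (simp add: basis_vec_inj)

lemma col1_inj: "finite A \<Longrightarrow> finite A' \<Longrightarrow> (col1 A :: (nat \<Rightarrow> 'a::field) list) = col1 A' \<Longrightarrow> A = A'"
proof -
  assume a: "finite A" "finite A'" "(col1 A :: (nat \<Rightarrow> 'a::field) list) = col1 A'"
  have "(basis_vec :: nat \<Rightarrow> nat \<Rightarrow> 'a) ` A = basis_vec ` A'"
    using a(3) set_col1[OF a(1), where 'a='a] set_col1[OF a(2), where 'a='a] by simp
  then show "A = A'" using inj_image_eq_iff[OF basis_inj_on[where 'a='a]] by blast
qed

lemma sumvec_not_basis2:
  assumes "finite C" "card C \<ge> 2"
  shows "sumvec C \<noteq> (basis_vec x :: nat \<Rightarrow> 'a::field)"
proof
  assume e: "sumvec C = (basis_vec x :: nat \<Rightarrow> 'a)"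
  have "C \<subseteq> {x}"
  proof
    fix c assume c: "c \<in> C"
    have "(sumvec C c :: 'a) = 1" using sumvec_val[OF assms(1), of c] c by simp
    then have "(basis_vec x c :: 'a) = 1" using e by simp
    then show "c \<in> {x}" unfolding basis_vec_def by (simp split: if_splits)
  qed
  then have "card C \<le> card {x}" by (intro card_mono) auto
  then have "card C \<le> 1" by simp
  then show False using assms(2) by simp
qed

lemma col1_ne_colr:
  assumes "finite A" "finite C" "card C \<ge> 2"
  shows "(col1 A :: (nat \<Rightarrow> 'a::field) list) \<noteq> colr B C"
proof
  assume e: "(col1 A :: (nat \<Rightarrow> 'a::field) list) = colr B C"
  have "sumvec C \<in> set (colr B C :: (nat \<Rightarrow> 'a) list)" unfolding colr_def by simp
  then have "(sumvec C :: nat \<Rightarrow> 'a) \<in> basis_vec ` A" using e set_col1[OF assms(1)] by metis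
  then show False using sumvec_not_basis2[OF assms(2,3)] by blast
qed

lemma colr_inj:
  assumes "finite B" "finite B'" "finite C" "finite C'"
    "(colr B C :: (nat \<Rightarrow> 'a::field) list) = colr B' C'"
  shows "B = B' \<and> C = C'"
proof -
  have 1: "map (basis_vec :: nat \<Rightarrow> nat \<Rightarrow> 'a) (sorted_list_of_set B) = map basis_vec (sorted_list_of_set B')"
    and 2: "(sumvec C :: nat \<Rightarrow> 'a) = sumvec C'"
    using assms(5) unfolding colr_def by simp_all
  have "(col1 B :: (nat \<Rightarrow> 'a) list) = col1 B'" using 1 unfolding col1_def .
  then have "B = B'" using col1_inj assms(1,2) by blast
  moreover have "C = C'" using sumvec_inj[OF assms(3,4) 2] .
  ultimately show ?thesis by simp
qed


locale T8 =
  fixes s t :: nat and xi :: "nat \<Rightarrow> nat" and cols :: "(nat \<Rightarrow> 'a::field) list list"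
  assumes s2: "s \<ge> 2" and t2: "t \<ge> 2"
    and rel: "\<forall>r. 2 \<le> r \<and> r \<le> s - 1 \<longrightarrow>
           ((s*t - t) choose ((r - 1) * t + 1)) * xi r = ((s*t - t) choose (r * t)) * xi (r + 1)"
    and rel1: "(s - 1) * xi 1 = ((s*t - t) choose t) * xi 2"
    and cols: "mset cols = theorem8_columns s t xi"
begin

definition As where "As = {A. A \<subseteq> {1..s*t} \<and> card A = t}"
definition Bs where "Bs = {B. B \<subseteq> {1..s*t} \<and> card B = t - 1}"
definition Cs where "Cs r B = {C. C \<subseteq> {1..s*t} - B \<and> card C = (r - 1) * t + 1}"
definition D1 where "D1 = (\<lambda>A. (1::nat, {}::nat set, A)) ` As"
definition D2 where "D2 = Sigma {2..s} (\<lambda>r. Sigma Bs (Cs r))"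
definition Dsc where "Dsc = D1 \<union> D2"

lemma fin_As: "finite As"
  unfolding As_def by (rule finite_subset[of _ "Pow {1..s*t}"]) auto
lemma fin_Bs: "finite Bs"
  unfolding Bs_def by (rule finite_subset[of _ "Pow {1..s*t}"]) auto
lemma fin_Cs: "finite (Cs r B)"
  unfolding Cs_def by (rule finite_subset[of _ "Pow {1..s*t}"]) auto
lemma fin_D1: "finite D1" unfolding D1_def using fin_As by simp
lemma fin_D2: "finite D2" unfolding D2_def using fin_Bs fin_Cs by auto
lemma fin_Dsc: "finite Dsc" unfolding Dsc_def using fin_D1 fin_D2 by simp

lemma D1_mem: "(r, B, C) \<in> D1 \<longleftrightarrow> r = 1 \<and> B = {} \<and> C \<subseteq> {1..s*t} \<and> card C = t"
  unfolding D1_def As_def by auto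
lemma D2_mem: "(r, B, C) \<in> D2 \<longleftrightarrow> 2 \<le> r \<and> r \<le> s \<and> B \<subseteq> {1..s*t} \<and> card B = t - 1
   \<and> C \<subseteq> {1..s*t} - B \<and> card C = (r - 1) * t + 1"
  unfolding D2_def Bs_def Cs_def by auto

lemma G: "(\<Sum>d\<in>Dsc. f d) = (\<Sum>A\<in>As. f (1, {}, A)) + (\<Sum>r\<in>{2..s}. \<Sum>B\<in>Bs. \<Sum>C\<in>Cs r B. f (r, B, C))"
proof -
  have disj: "D1 \<inter> D2 = {}" unfolding D1_def D2_def by auto
  have 1: "(\<Sum>d\<in>D1. f d) = (\<Sum>A\<in>As. f (1, {}, A))"
    unfolding D1_def by (subst sum.reindex) (auto simp: inj_on_def)
  have 2: "(\<Sum>d\<in>D2. f d) = (\<Sum>r\<in>{2..s}. \<Sum>x\<in>Sigma Bs (Cs r). f (r, x))"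
    unfolding D2_def using sum.Sigma[of "{2..s}" "\<lambda>r. Sigma Bs (Cs r)" "\<lambda>r x. f (r, x)"] fin_Bs fin_Cs
    by (simp add: case_prod_beta')
  have 3: "(\<Sum>x\<in>Sigma Bs (Cs r). f (r, x)) = (\<Sum>B\<in>Bs. \<Sum>C\<in>Cs r B. f (r, B, C))" for r
    using sum.Sigma[of Bs "Cs r" "\<lambda>B C. f (r, B, C)"] fin_Bs fin_Cs
    by (simp add: case_prod_beta')
  show ?thesis unfolding Dsc_def
    using sum.union_disjoint[OF fin_D1 fin_D2 disj, of f] 1 2 3 by simp
qed


lemma card_C_ge: "(r, B, C) \<in> D2 \<Longrightarrow> card C \<ge> t + 1"
proof -
  assume "(r, B, C) \<in> D2"
  then have "2 \<le> r" "card C = (r - 1) * t + 1" using D2_mem by auto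
  moreover have "1 * t \<le> (r - 1) * t" using \<open>2 \<le> r\<close> by (intro mult_le_mono1) simp
  ultimately show ?thesis by linarith
qed

lemma fin_C: assumes "(r, B, C) \<in> Dsc" shows "finite C \<and> finite B"
proof -
  have "C \<subseteq> {1..s*t} \<and> B \<subseteq> {1..s*t}" using assms unfolding Dsc_def using D1_mem D2_mem by auto
  then show ?thesis using finite_subset[OF _ finite_atLeastAtMost] by blast
qed

lemma count_M: "count (theorem8_columns s t xi) v = (\<Sum>d\<in>Dsc. if v = colof d then xi (fst d) else 0)"
proof -
  have "(\<Sum>d\<in>Dsc. if v = colof d then xi (fst d) else 0) =
    (\<Sum>A\<in>As. if v = col1 A then xi 1 else 0) + (\<Sum>r\<in>{2..s}. \<Sum>B\<in>Bs. \<Sum>C\<in>Cs r B. if v = colr B C then xi r else 0)"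
    unfolding G by (intro arg_cong2[where f="(+)"] sum.cong refl) (auto simp: colof_def)
  then show ?thesis
    unfolding theorem8_columns_def Let_def count_union count_sum count_replicate_mset As_def Bs_def Cs_def
    by (simp add: col1_def colr_def sumvec_def)
qed

lemma colof_inj: "inj_on (colof :: _ \<Rightarrow> (nat \<Rightarrow> 'a) list) Dsc"
proof (rule inj_onI)
  fix d d' assume d: "d \<in> Dsc" "d' \<in> Dsc" and e: "(colof d :: (nat \<Rightarrow> 'a) list) = colof d'"
  obtain r B C where dd: "d = (r, B, C)" by (cases d) auto
  obtain r' B' C' where dd': "d' = (r', B', C')" by (cases d') auto
  have f: "finite B" "finite C" "finite B'" "finite C'" using fin_C d dd dd' by auto
  show "d = d'"
  proof (cases "d \<in> D1")
    case True
    then have r: "r = 1" "B = {}" using dd D1_mem by auto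
    show ?thesis
    proof (cases "d' \<in> D1")
      case True
      then have "r' = 1" "B' = {}" using dd' D1_mem by auto
      moreover have "(col1 C :: (nat \<Rightarrow> 'a) list) = col1 C'" using e r \<open>r' = 1\<close> dd dd' by (simp add: colof_def)
      ultimately show ?thesis using col1_inj f r dd dd' by blast
    next
      case False
      then have d2: "d' \<in> D2" using d Dsc_def by auto
      then have "r' \<noteq> 1" "card C' \<ge> 2" using dd' D2_mem card_C_ge[of r' B' C'] t2 by auto
      then have "(col1 C :: (nat \<Rightarrow> 'a) list) = colr B' C'" using e r dd dd' by (simp add: colof_def)
      then show ?thesis using col1_ne_colr f \<open>card C' \<ge> 2\<close> by blast
    qed
  next
    case False
    then have d2: "d \<in> D2" using d Dsc_def by auto
    then have r: "r \<noteq> 1" "card C \<ge> 2" using dd D2_mem card_C_ge[of r B C] t2 by auto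
    show ?thesis
    proof (cases "d' \<in> D1")
      case True
      then have "r' = 1" using dd' D1_mem by auto
      then have "(col1 C' :: (nat \<Rightarrow> 'a) list) = colr B C" using e r dd dd' by (simp add: colof_def)
      then show ?thesis using col1_ne_colr f r by metis
    next
      case False
      then have d2': "d' \<in> D2" using d Dsc_def by auto
      then have r': "r' \<noteq> 1" using dd' D2_mem by auto
      then have "(colr B C :: (nat \<Rightarrow> 'a) list) = colr B' C'" using e r dd dd' by (simp add: colof_def)
      then have bc: "B = B'" "C = C'" using colr_inj f by blast+
      have "(r - 1) * t + 1 = (r' - 1) * t + 1" using d2 d2' dd dd' D2_mem bc by auto
      then have "r - 1 = r' - 1" using t2 by simp
      then have "r = r'" using d2 d2' dd dd' D2_mem by auto
      then show ?thesis using bc dd dd' by simp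
    qed
  qed
qed

lemma count_colof: "d \<in> Dsc \<Longrightarrow> count (mset cols) (colof d) = xi (fst d)"
proof -
  assume d: "d \<in> Dsc"
  have "(\<Sum>d'\<in>Dsc. if colof d = (colof d' :: (nat \<Rightarrow> 'a) list) then xi (fst d') else 0)
      = (\<Sum>d'\<in>Dsc. if d = d' then xi (fst d') else 0)"
    by (rule sum.cong[OF refl]) (use colof_inj d in \<open>auto simp: inj_on_def\<close>)
  also have "\<dots> = xi (fst d)" using fin_Dsc d by simp
  finally show ?thesis unfolding cols count_M .
qed

lemma col_in: "c < length cols \<Longrightarrow> \<exists>d\<in>Dsc. cols ! c = colof d"
proof (rule ccontr)
  assume c: "c < length cols" and n: "\<not> (\<exists>d\<in>Dsc. cols ! c = colof d)"
  have "count (mset cols) (cols ! c) > 0" using c by (simp add: count_mset_gt_0)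
  moreover have "count (mset cols) (cols ! c) = 0"
    unfolding cols count_M using n by (intro sum.neutral) auto
  ultimately show False by simp
qed

definition desc where "desc c = (SOME d. d \<in> Dsc \<and> cols ! c = colof d)"

lemma desc: assumes "c < length cols" shows "desc c \<in> Dsc \<and> cols ! c = colof (desc c)"
proof -
  have "\<exists>d. d \<in> Dsc \<and> cols ! c = colof d" using col_in[OF assms] by blast
  then show ?thesis unfolding desc_def by (rule someI_ex)
qed

lemma card_val: "d \<in> Dsc \<Longrightarrow> card {c. c < length cols \<and> cols ! c = colof d} = xi (fst d)"
  using count_colof[of d] count_eq_card[of cols "colof d"] by simp

lemma card_Q: "card {c. c < length cols \<and> Q (desc c)} = (\<Sum>d\<in>Dsc. if Q d then xi (fst d) else 0)"
proof -
  have eq: "{c. c < length cols \<and> Q (desc c)} = (\<Union>d\<in>{d\<in>Dsc. Q d}. {c. c < length cols \<and> cols ! c = colof d})"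
  proof (rule set_eqI, rule iffI)
    fix c assume "c \<in> {c. c < length cols \<and> Q (desc c)}"
    then show "c \<in> (\<Union>d\<in>{d\<in>Dsc. Q d}. {c. c < length cols \<and> cols ! c = colof d})"
      using desc[of c] by (intro UN_I[of "desc c"]) auto
  next
    fix c assume "c \<in> (\<Union>d\<in>{d\<in>Dsc. Q d}. {c. c < length cols \<and> cols ! c = colof d})"
    then obtain d where d: "d \<in> Dsc" "Q d" "c < length cols" "cols ! c = colof d" by blast
    have "colof (desc c) = (colof d :: (nat \<Rightarrow> 'a) list)" using desc[of c] d by simp
    then have "desc c = d" using inj_onD[OF colof_inj] desc[of c] d by blast
    then show "c \<in> {c. c < length cols \<and> Q (desc c)}" using d by simp
  qed
  have "card {c. c < length cols \<and> Q (desc c)} = (\<Sum>d\<in>{d\<in>Dsc. Q d}. card {c. c < length cols \<and> cols ! c = colof d})"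
    unfolding eq
  proof (rule card_UN_disjoint)
    show "finite {d \<in> Dsc. Q d}" using fin_Dsc by simp
    show "\<forall>i\<in>{d \<in> Dsc. Q d}. finite {c. c < length cols \<and> cols ! c = colof i}" by simp
    show "\<forall>i\<in>{d \<in> Dsc. Q d}. \<forall>j\<in>{d \<in> Dsc. Q d}. i \<noteq> j \<longrightarrow>
      {c. c < length cols \<and> cols ! c = colof i} \<inter> {c. c < length cols \<and> cols ! c = colof j} = {}"
    proof (intro ballI impI)
      fix d d' assume "d \<in> {d \<in> Dsc. Q d}" "d' \<in> {d \<in> Dsc. Q d}" "d \<noteq> d'"
      then have "(colof d :: (nat \<Rightarrow> 'a) list) \<noteq> colof d'" using inj_onD[OF colof_inj, of d d'] by blast
      then show "{c. c < length cols \<and> cols ! c = colof d} \<inter> {c. c < length cols \<and> cols ! c = colof d'} = {}"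
        by auto
    qed
  qed
  also have "\<dots> = (\<Sum>d\<in>{d\<in>Dsc. Q d}. xi (fst d))" by (rule sum.cong) (auto simp: card_val)
  also have "\<dots> = (\<Sum>d\<in>Dsc. if Q d then xi (fst d) else 0)" using sum.inter_filter[OF fin_Dsc] by simp
  finally show ?thesis .
qed

end


definition dirD :: "nat \<Rightarrow> nat \<times> nat set \<times> nat set \<Rightarrow> bool" where
  "dirD i d = (case d of (r, B, C) \<Rightarrow> if r = 1 then i \<in> C else i \<in> B)"
definition upD :: "nat \<Rightarrow> nat \<times> nat set \<times> nat set \<Rightarrow> bool" where
  "upD i d = (case d of (r, B, C) \<Rightarrow> r \<noteq> 1 \<and> i \<notin> B \<and> i \<in> C)"
definition loD :: "nat \<Rightarrow> nat \<times> nat set \<times> nat set \<Rightarrow> bool" where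
  "loD i d = (\<not> dirD i d \<and> \<not> upD i d)"
definition keyL :: "nat \<times> nat set \<times> nat set \<Rightarrow> nat set" where
  "keyL d = (case d of (r, B, C) \<Rightarrow> B \<union> C)"
definition keyU :: "nat \<Rightarrow> nat \<times> nat set \<times> nat set \<Rightarrow> nat set" where
  "keyU i d = (case d of (r, B, C) \<Rightarrow> C - {i})"

lemma ar1: "1 \<le> r \<Longrightarrow> 1 \<le> (t::nat) \<Longrightarrow> t - 1 + ((r - 1) * t + 1) = r * t"
proof -
  assume "1 \<le> r" "1 \<le> t"
  then obtain m where "r = Suc m" by (cases r) auto
  then show ?thesis using \<open>1 \<le> t\<close> by simp
qed

lemma ar2: "1 \<le> r \<Longrightarrow> (t::nat) + (r - 1) * t = r * t"
proof -
  assume "1 \<le> r"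
  then obtain m where "r = Suc m" by (cases r) auto
  then show ?thesis by simp
qed

context T8 begin

lemma Dsc_cases:
  assumes "(r, B, C) \<in> Dsc"
  obtains "r = 1" "B = {}" "C \<subseteq> {1..s*t}" "card C = t"
  | "2 \<le> r" "r \<le> s" "B \<subseteq> {1..s*t}" "card B = t - 1" "C \<subseteq> {1..s*t} - B" "card C = (r - 1) * t + 1"
proof -
  from assms consider (a) "(r, B, C) \<in> D1" | (b) "(r, B, C) \<in> D2" unfolding Dsc_def by blast
  then show ?thesis
  proof cases
    case a then show ?thesis using that(1) by (simp add: D1_mem)
  next
    case b then show ?thesis using that(2) by (simp add: D2_mem)
  qed
qed

lemma card_BC:
  assumes "(r, B, C) \<in> Dsc" "r \<noteq> 1"
  shows "card (B \<union> C) = r * t" "B \<inter> C = {}"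
proof -
  have f: "finite B" "finite C" using fin_C[OF assms(1)] by auto
  from assms(1) show "B \<inter> C = {}" using assms(2) by (cases rule: Dsc_cases) auto
  then have "card (B \<union> C) = card B + card C" using f card_Un_disjoint by blast
  moreover from assms(1) have "card B + card C = r * t"
    using assms(2) t2 by (cases rule: Dsc_cases) (use ar2[of r t] in auto)
  ultimately show "card (B \<union> C) = r * t" by simp
qed

lemma lo_props:
  assumes "(r, B, C) \<in> Dsc" "loD i (r, B, C)" "i \<in> {1..s*t}"
  shows "(r = 1 \<and> i \<notin> C) \<or> (2 \<le> r \<and> r < s \<and> i \<notin> B \<and> i \<notin> C)"
proof (cases "r = 1")
  case True
  then show ?thesis using assms(2) unfolding loD_def dirD_def by simp
next
  case False
  then have nb: "i \<notin> B" "i \<notin> C" using assms(2) unfolding loD_def dirD_def upD_def by auto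
  have r2: "2 \<le> r \<and> r \<le> s" using assms(1) False by (cases rule: Dsc_cases) auto
  have sub: "B \<union> C \<subseteq> {1..s*t}" using assms(1) False by (cases rule: Dsc_cases) auto
  have "r \<noteq> s"
  proof
    assume "r = s"
    then have "card (B \<union> C) = card {1..s*t}" using card_BC[OF assms(1) False] by simp
    then have "B \<union> C = {1..s*t}" using sub card_subset_eq[OF finite_atLeastAtMost sub] by blast
    then show False using nb assms(3) by blast
  qed
  then show ?thesis using r2 nb by simp
qed

lemma rec_dir:
  assumes "d \<in> Dsc" "dirD i d"
  shows "basis_vec i \<in> set (colof d :: (nat \<Rightarrow> 'a) list)"
proof -
  obtain r B C where dd: "d = (r, B, C)" by (cases d) auto
  have f: "finite B" "finite C" using fin_C assms(1) dd by auto
  show ?thesis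
  proof (cases "r = 1")
    case True
    then show ?thesis using assms(2) dd f by (simp add: dirD_def colof_def set_col1)
  next
    case False
    then show ?thesis using assms(2) dd f by (simp add: dirD_def colof_def set_colr)
  qed
qed

lemma rec_pair:
  assumes "d \<in> Dsc" "d' \<in> Dsc" "loD i d" "upD i d'" "keyL d = keyU i d'"
  shows "basis_vec i \<in> lin_span (set (colof d :: (nat \<Rightarrow> 'a) list) \<union> set (colof d'))"
proof -
  obtain r B C where dd: "d = (r, B, C)" by (cases d) auto
  obtain r' B' C' where dd': "d' = (r', B', C')" by (cases d') auto
  have f: "finite B" "finite C" "finite B'" "finite C'" using fin_C assms(1,2) dd dd' by auto
  have up: "r' \<noteq> 1" "i \<notin> B'" "i \<in> C'" using assms(4) dd' unfolding upD_def by auto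
  define K where "K = C' - {i}"
  have KBC: "K = B \<union> C" using assms(5) dd dd' unfolding K_def keyL_def keyU_def by simp
  have C'K: "C' = insert i K" "i \<notin> K" "finite K" using up f unfolding K_def by auto
  have sC': "sumvec C' = (\<lambda>x. basis_vec i x + (sumvec K x :: 'a))"
    using sumvec_insert[OF C'K(3,2)] C'K(1) by simp
  let ?S = "set (colof d :: (nat \<Rightarrow> 'a) list) \<union> set (colof d')"
  have 1: "(sumvec C' :: nat \<Rightarrow> 'a) \<in> lin_span ?S"
    using up(1) dd' f by (intro span_base) (simp add: colof_def set_colr)
  have 2: "(sumvec K :: nat \<Rightarrow> 'a) \<in> lin_span ?S"
  proof (cases "r = 1")
    case True
    have "(sumvec K :: nat \<Rightarrow> 'a) \<in> lin_span (set (colof d :: (nat \<Rightarrow> 'a) list))"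
    proof -
      have "B = {}" using assms(1)[unfolded dd] True by (cases rule: Dsc_cases) auto
      then have "K = C" using KBC by simp
      then show ?thesis using True dd f by (intro sumvec_basis_span) (auto simp: colof_def set_col1)
    qed
    then show ?thesis using span_mono[of "set (colof d :: (nat \<Rightarrow> 'a) list)" ?S] by blast
  next
    case False
    have disj: "B \<inter> C = {}" using card_BC[OF assms(1)[unfolded dd] False] by simp
    have sK: "sumvec K = (\<lambda>x. sumvec B x + (sumvec C x :: 'a))" using KBC sumvec_Un[OF f(1,2) disj] by simp
    have setd: "set (colof d :: (nat \<Rightarrow> 'a) list) = insert (sumvec C) (basis_vec ` B)"
      using False dd f by (simp add: colof_def set_colr)
    have a: "(sumvec B :: nat \<Rightarrow> 'a) \<in> lin_span ?S" using setd f by (intro sumvec_basis_span) auto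
    have b: "(sumvec C :: nat \<Rightarrow> 'a) \<in> lin_span ?S" using setd by (intro span_base) auto
    show ?thesis unfolding sK using span_add[OF a b] .
  qed
  have "basis_vec i = (\<lambda>x. sumvec C' x - (sumvec K x :: 'a))" unfolding sC' by simp
  then show ?thesis using span_diff[OF 1 2] by simp
qed

end


lemma binom_ident:
  fixes s t r :: nat
  assumes "t \<ge> 1" "2 \<le> r" "r < s"
  shows "((s*t - t) choose ((r - 1) * t + 1)) * ((s*t - r*t - 1) choose (t - 1))
       = ((s*t - t) choose (r * t)) * ((r*t) choose (t - 1))"
proof -
  obtain u where u: "t = Suc u" using assms(1) by (cases t) auto
  obtain q where q: "s = r + 1 + q" using assms(3) by (metis add.commute add_Suc less_imp_Suc_add plus_1_eq_Suc)
  obtain r1 where r1: "r = Suc r1" using assms(2) by (cases r) auto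
  define n where "n = s*t - t"
  define m' where "m' = s*t - r*t - 1"
  have n: "n = (r + q) * t" unfolding n_def q by (simp add: algebra_simps)
  have m': "m' = q * t + u" unfolding m'_def q u by (simp add: algebra_simps)
  have a1: "(r - 1) * t + 1 = r1 * t + 1" using r1 by simp
  have sym1: "(n choose (r1 * t + 1)) = (n choose m')"
  proof -
    have "r1 * t + 1 \<le> n" unfolding n r1 u by (simp add: algebra_simps)
    moreover have "n - (r1 * t + 1) = m'" unfolding n m' r1 u by (simp add: algebra_simps)
    ultimately show ?thesis using binomial_symmetric[of "r1 * t + 1" n] by simp
  qed
  have cm1: "(n choose m') * (m' choose u) = (n choose u) * ((n - u) choose (m' - u))"
    by (rule choose_mult) (simp_all add: m' n u r1 algebra_simps)
  have cm2: "(n choose (r*t)) * ((r*t) choose u) = (n choose u) * ((n - u) choose (r*t - u))"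
    by (rule choose_mult) (simp_all add: n u r1 algebra_simps)
  have sym2: "((n - u) choose (m' - u)) = ((n - u) choose (r*t - u))"
  proof -
    have "r*t - u \<le> n - u" unfolding n u by (simp add: algebra_simps)
    moreover have "(n - u) - (r*t - u) = m' - u" unfolding n m' u r1 by (simp add: algebra_simps)
    ultimately show ?thesis using binomial_symmetric[of "r*t - u" "n - u"] by simp
  qed
  show ?thesis
    unfolding n_def[symmetric] m'_def[symmetric] a1 sym1 using cm1 cm2 sym2 u by simp
qed

context T8 begin

lemma xi_rel1: "xi 1 = ((s*t - t - 1) choose (t - 1)) * xi 2"
proof -
  have a: "t * ((s*t - t) choose t) = (s*t - t) * ((s*t - t - 1) choose (t - 1))"
    using binomial_absorption[of "t - 1" "s*t - t"] t2 by simp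
  have b: "s*t - t = (s - 1) * t" by (simp add: diff_mult_distrib)
  have "((s - 1) * t) * xi 1 = t * ((s - 1) * xi 1)" by simp
  also have "\<dots> = (t * ((s*t - t) choose t)) * xi 2" using rel1 by simp
  also have "\<dots> = ((s*t - t) * ((s*t - t - 1) choose (t - 1))) * xi 2" using a by simp
  also have "\<dots> = ((s - 1) * t) * (((s*t - t - 1) choose (t - 1)) * xi 2)" using b by simp
  finally show ?thesis using s2 t2 by simp
qed

lemma xi_relr:
  assumes "2 \<le> r" "r < s"
  shows "xi r * ((r*t) choose (t - 1)) = xi (r + 1) * ((s*t - r*t - 1) choose (t - 1))"
proof -
  define a where "a = (s*t - t) choose ((r - 1) * t + 1)"
  define b where "b = (s*t - t) choose (r * t)"
  define x where "x = (r*t) choose (t - 1)"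
  define y where "y = (s*t - r*t - 1) choose (t - 1)"
  have id: "a * y = b * x" unfolding a_def b_def x_def y_def using binom_ident[of t r s] assms t2 by simp
  have rl: "a * xi r = b * xi (r + 1)" unfolding a_def b_def using rel assms by simp
  have bpos: "b > 0" unfolding b_def
  proof (rule zero_less_binomial)
    have "r * t + t \<le> s * t" using assms by (metis add.commute mult_Suc mult_le_mono1 Suc_leI)
    then show "r * t \<le> s * t - t" by simp
  qed
  have "b * (xi r * x) = xi r * (a * y)" using id by simp
  also have "\<dots> = (a * xi r) * y" by simp
  also have "\<dots> = b * (xi (r + 1) * y)" using rl by simp
  finally show ?thesis unfolding x_def[symmetric] y_def[symmetric] using bpos by simp
qed

end


context T8 begin

definition LK where "LK i K = {d\<in>Dsc. loD i d \<and> keyL d = K}"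
definition UK where "UK i K = {d\<in>Dsc. upD i d \<and> keyU i d = K}"

lemma LK_char:
  assumes "d \<in> LK i K" "i \<in> {1..s*t}"
  shows "\<exists>r. 1 \<le> r \<and> r < s \<and> card K = r*t \<and> K \<subseteq> {1..s*t} - {i}"
proof -
  obtain r B C where dd: "d = (r, B, C)" by (cases d) auto
  have d: "(r, B, C) \<in> Dsc" "loD i (r, B, C)" "B \<union> C = K" using assms(1) dd unfolding LK_def keyL_def by auto
  have sub: "B \<union> C \<subseteq> {1..s*t}" using d(1) by (cases rule: Dsc_cases) auto
  from lo_props[OF d(1,2) assms(2)] show ?thesis
  proof
    assume a: "r = 1 \<and> i \<notin> C"
    have "B = {} \<and> card C = t" using d(1) a by (cases rule: Dsc_cases) auto
    then show ?thesis using d(3) sub a s2 by (intro exI[of _ 1]) auto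
  next
    assume a: "2 \<le> r \<and> r < s \<and> i \<notin> B \<and> i \<notin> C"
    then have "card K = r*t" using card_BC[OF d(1)] d(3) by auto
    then show ?thesis using d(3) sub a by (intro exI[of _ r]) auto
  qed
qed

lemma UK_char:
  assumes "d \<in> UK i K" "i \<in> {1..s*t}"
  shows "\<exists>r. 1 \<le> r \<and> r < s \<and> card K = r*t \<and> K \<subseteq> {1..s*t} - {i}"
proof -
  obtain r B C where dd: "d = (r, B, C)" by (cases d) auto
  have d: "(r, B, C) \<in> Dsc" "r \<noteq> 1" "i \<notin> B" "i \<in> C" "C - {i} = K"
    using assms(1) dd unfolding UK_def upD_def keyU_def by auto
  have c: "2 \<le> r \<and> r \<le> s \<and> C \<subseteq> {1..s*t} \<and> card C = (r - 1) * t + 1"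
    using d(1,2) by (cases rule: Dsc_cases) auto
  have fC: "finite C" using fin_C[OF d(1)] by simp
  have "card K = (r - 1) * t" using d(4) d(5)[symmetric] c fC by (simp add: card_Diff_singleton)
  then show ?thesis using d c by (intro exI[of _ "r - 1"]) auto
qed

lemma UK_eq:
  assumes "1 \<le> r" "r < s" "card K = r*t" "K \<subseteq> {1..s*t} - {i}" "i \<in> {1..s*t}"
  shows "UK i K = (\<lambda>B. (r + 1, B, insert i K)) ` {B. B \<subseteq> {1..s*t} - insert i K \<and> card B = t - 1}"
proof (rule set_eqI, rule iffI)
  have fK: "finite K" "i \<notin> K" using assms(4) finite_subset[of K "{1..s*t}"] by auto
  fix d assume dU: "d \<in> UK i K"
  obtain r' B C where dd: "d = (r', B, C)" by (cases d) auto
  have d: "(r', B, C) \<in> Dsc" "r' \<noteq> 1" "i \<notin> B" "i \<in> C" "C - {i} = K"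
    using dU dd unfolding UK_def upD_def keyU_def by auto
  have c: "2 \<le> r' \<and> r' \<le> s \<and> B \<subseteq> {1..s*t} \<and> card B = t - 1 \<and> C \<subseteq> {1..s*t} - B \<and> card C = (r' - 1) * t + 1"
    using d(1,2) by (cases rule: Dsc_cases) auto
  have CK: "C = insert i K" using d by auto
  have "card C = r * t + 1" using CK fK assms(3) by simp
  then have "(r' - 1) * t = r * t" using c by simp
  then have "r' - 1 = r" using t2 by simp
  moreover have "2 \<le> r'" using c by simp
  ultimately have "r' = r + 1" by linarith
  then show "d \<in> (\<lambda>B. (r + 1, B, insert i K)) ` {B. B \<subseteq> {1..s*t} - insert i K \<and> card B = t - 1}"
    using dd CK c d by (intro image_eqI[of _ _ B]) auto
next
  have fK: "finite K" "i \<notin> K" using assms(4) finite_subset[of K "{1..s*t}"] by auto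
  fix d assume "d \<in> (\<lambda>B. (r + 1, B, insert i K)) ` {B. B \<subseteq> {1..s*t} - insert i K \<and> card B = t - 1}"
  then obtain B where dd: "d = (r + 1, B, insert i K)" "B \<subseteq> {1..s*t} - insert i K" "card B = t - 1" by auto
  have "card (insert i K) = r * t + 1" using fK assms(3) by simp
  then have "(r + 1, B, insert i K) \<in> D2" unfolding D2_mem using dd assms by auto
  then show "d \<in> UK i K" unfolding UK_def Dsc_def upD_def keyU_def using dd fK assms(1) by auto
qed

lemma sum_UK:
  assumes "1 \<le> r" "r < s" "card K = r*t" "K \<subseteq> {1..s*t} - {i}" "i \<in> {1..s*t}"
  shows "(\<Sum>d\<in>UK i K. xi (fst d)) = ((s*t - r*t - 1) choose (t - 1)) * xi (r + 1)"
proof -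
  have fK: "finite K" "i \<notin> K" using assms(4) finite_subset[of K "{1..s*t}"] by auto
  have inj: "inj_on (\<lambda>B. (r + 1, B, insert i K)) X" for X by (rule inj_onI) simp
  have "card ({1..s*t} - insert i K) = s*t - (r*t + 1)"
    using assms fK by (subst card_Diff_subset) auto
  then have "card {B. B \<subseteq> {1..s*t} - insert i K \<and> card B = t - 1} = (s*t - r*t - 1) choose (t - 1)"
    by (subst n_subsets) auto
  then show ?thesis unfolding UK_eq[OF assms] by (subst sum.reindex[OF inj]) simp
qed

lemma LK_eq1:
  assumes "card K = t" "K \<subseteq> {1..s*t} - {i}" "i \<in> {1..s*t}"
  shows "LK i K = {(1, {}, K)}"
proof (rule set_eqI, rule iffI)
  fix d assume dL: "d \<in> LK i K"
  obtain r B C where dd: "d = (r, B, C)" by (cases d) auto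
  have d: "(r, B, C) \<in> Dsc" "loD i (r, B, C)" "B \<union> C = K" using dL dd unfolding LK_def keyL_def by auto
  from lo_props[OF d(1,2) assms(3)] show "d \<in> {(1, {}, K)}"
  proof
    assume a: "r = 1 \<and> i \<notin> C"
    have "B = {}" using d(1) a by (cases rule: Dsc_cases) auto
    then show ?thesis using a dd d(3) by simp
  next
    assume a: "2 \<le> r \<and> r < s \<and> i \<notin> B \<and> i \<notin> C"
    then have "card K = r*t" using card_BC[OF d(1)] d(3) by auto
    moreover have "1 * t < r * t" using a t2 by (intro mult_less_mono1) auto
    ultimately show ?thesis using assms(1) by simp
  qed
next
  fix d assume "d \<in> {(1::nat, {}::nat set, K)}"
  then have dd: "d = (1, {}, K)" by simp
  have "(1::nat, {}::nat set, K) \<in> D1" unfolding D1_mem using assms by auto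
  then show "d \<in> LK i K" unfolding LK_def Dsc_def loD_def dirD_def upD_def keyL_def using dd assms by auto
qed

lemma LK_eqr:
  assumes "2 \<le> r" "r < s" "card K = r*t" "K \<subseteq> {1..s*t} - {i}" "i \<in> {1..s*t}"
  shows "LK i K = (\<lambda>B. (r, B, K - B)) ` {B. B \<subseteq> K \<and> card B = t - 1}"
proof (rule set_eqI, rule iffI)
  have fK: "finite K" "i \<notin> K" using assms(4) finite_subset[of K "{1..s*t}"] by auto
  fix d assume dL: "d \<in> LK i K"
  obtain r' B C where dd: "d = (r', B, C)" by (cases d) auto
  have d: "(r', B, C) \<in> Dsc" "loD i (r', B, C)" "B \<union> C = K" using dL dd unfolding LK_def keyL_def by auto
  from lo_props[OF d(1,2) assms(5)] show "d \<in> (\<lambda>B. (r, B, K - B)) ` {B. B \<subseteq> K \<and> card B = t - 1}"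
  proof
    assume a: "r' = 1 \<and> i \<notin> C"
    have "B = {} \<and> card C = t" using d(1) a by (cases rule: Dsc_cases) auto
    then have "card K = t" using d(3) by simp
    moreover have "1 * t < r * t" using assms t2 by (intro mult_less_mono1) auto
    ultimately show ?thesis using assms(3) by simp
  next
    assume a: "2 \<le> r' \<and> r' < s \<and> i \<notin> B \<and> i \<notin> C"
    then have "card K = r'*t" using card_BC[OF d(1)] d(3) by auto
    then have "r' = r" using assms(3) t2 by simp
    moreover have "B \<inter> C = {}" using card_BC[OF d(1)] a by auto
    moreover have "card B = t - 1" using d(1) a by (cases rule: Dsc_cases) auto
    ultimately show ?thesis using dd d(3) by (intro image_eqI[of _ _ B]) auto
  qed
next
  have fK: "finite K" "i \<notin> K" using assms(4) finite_subset[of K "{1..s*t}"] by auto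
  fix d assume "d \<in> (\<lambda>B. (r, B, K - B)) ` {B. B \<subseteq> K \<and> card B = t - 1}"
  then obtain B where dd: "d = (r, B, K - B)" "B \<subseteq> K" "card B = t - 1" by auto
  have "card (K - B) = r * t - (t - 1)" using dd fK assms(3) by (simp add: card_Diff_subset finite_subset)
  also have "\<dots> = (r - 1) * t + 1" using ar1[of r t] assms t2 by simp
  finally have "(r, B, K - B) \<in> D2" unfolding D2_mem using dd assms by auto
  then show "d \<in> LK i K" unfolding LK_def Dsc_def loD_def dirD_def upD_def keyL_def using dd fK assms by auto
qed

lemma sum_LKr:
  assumes "2 \<le> r" "r < s" "card K = r*t" "K \<subseteq> {1..s*t} - {i}" "i \<in> {1..s*t}"
  shows "(\<Sum>d\<in>LK i K. xi (fst d)) = ((r*t) choose (t - 1)) * xi r"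
proof -
  have fK: "finite K" using assms(4) finite_subset[of K "{1..s*t}"] by auto
  have inj: "inj_on (\<lambda>B. (r, B, K - B)) X" for X by (rule inj_onI) simp
  have "card {B. B \<subseteq> K \<and> card B = t - 1} = (r*t) choose (t - 1)"
    using fK assms(3) by (subst n_subsets) auto
  then show ?thesis unfolding LK_eqr[OF assms] by (subst sum.reindex[OF inj]) simp
qed

lemma fiber_eq:
  assumes "i \<in> {1..s*t}"
  shows "(\<Sum>d\<in>LK i K. xi (fst d)) = (\<Sum>d\<in>UK i K. xi (fst d))"
proof (cases "\<exists>r. 1 \<le> r \<and> r < s \<and> card K = r*t \<and> K \<subseteq> {1..s*t} - {i}")
  case True
  then obtain r where r: "1 \<le> r" "r < s" "card K = r*t" "K \<subseteq> {1..s*t} - {i}" by blast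
  show ?thesis
  proof (cases "r = 1")
    case True
    then have "card K = t" using r by simp
    then have "(\<Sum>d\<in>LK i K. xi (fst d)) = xi 1" using LK_eq1 r assms by simp
    also have "\<dots> = ((s*t - 1*t - 1) choose (t - 1)) * xi (1 + 1)"
      unfolding mult_1 one_add_one by (rule xi_rel1)
    also have "\<dots> = (\<Sum>d\<in>UK i K. xi (fst d))" using sum_UK[OF r assms, unfolded True] by (rule sym)
    finally show ?thesis .
  next
    case False
    then have r2: "2 \<le> r" using r by simp
    show ?thesis using sum_LKr[OF r2 r(2-4) assms] sum_UK[OF r assms] xi_relr[OF r2 r(2)] by (simp add: mult.commute)
  qed
next
  case False
  then have "LK i K = {}" "UK i K = {}" using LK_char[OF _ assms] UK_char[OF _ assms] by blast+
  then show ?thesis by simp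
qed

end


declare binomial_Suc_Suc[simp del]

context T8 begin

lemma st_ge: "t \<le> s * t"
  using mult_le_mono1[of 1 s t] s2 by simp

lemma card_P: "card {1..s*t} = s * t" by simp

lemma cardAs_in: "i \<in> {1..s*t} \<Longrightarrow> card {A\<in>As. i \<in> A} = (s*t - 1) choose (t - 1)"
proof -
  assume i: "i \<in> {1..s*t}"
  have "{A\<in>As. i \<in> A} = {A. A \<subseteq> {1..s*t} \<and> card A = Suc (t - 1) \<and> i \<in> A}"
    unfolding As_def using t2 by auto
  then show ?thesis using card_sub_in[OF finite_atLeastAtMost i, of "t - 1"] by simp
qed

lemma cardBs_in: "i \<in> {1..s*t} \<Longrightarrow> card {B\<in>Bs. i \<in> B} = (s*t - 1) choose (t - 2)"
proof -
  assume i: "i \<in> {1..s*t}"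
  have "{B\<in>Bs. i \<in> B} = {A. A \<subseteq> {1..s*t} \<and> card A = Suc (t - 2) \<and> i \<in> A}"
    unfolding Bs_def using t2 by (auto simp: Suc_diff_Suc numeral_2_eq_2)
  then show ?thesis using card_sub_in[OF finite_atLeastAtMost i, of "t - 2"] by simp
qed

lemma cardBs_notin: "i \<in> {1..s*t} \<Longrightarrow> card {B\<in>Bs. i \<notin> B} = (s*t - 1) choose (t - 1)"
proof -
  assume i: "i \<in> {1..s*t}"
  have "{B\<in>Bs. i \<notin> B} = {A. A \<subseteq> {1..s*t} \<and> card A = t - 1 \<and> i \<notin> A}"
    unfolding Bs_def by auto
  then show ?thesis using card_sub_notin[OF finite_atLeastAtMost i, of "t - 1"] by simp
qed

lemma card_PB: "B \<in> Bs \<Longrightarrow> card ({1..s*t} - B) = s*t - t + 1"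
proof -
  assume B: "B \<in> Bs"
  then have "card ({1..s*t} - B) = s*t - (t - 1)" unfolding Bs_def
    by (subst card_Diff_subset) (auto intro: finite_subset)
  then show ?thesis using st_ge t2 by (simp add: Suc_diff_le)
qed

lemma cardCs: assumes B: "B \<in> Bs" shows "card (Cs r B) = (s*t - t + 1) choose ((r - 1) * t + 1)"
proof -
  have "card (Cs r B) = card ({1..s*t} - B) choose ((r - 1) * t + 1)" unfolding Cs_def by (rule n_subsets) simp
  then show ?thesis unfolding card_PB[OF B] .
qed

lemma cardCs_in: "B \<in> Bs \<Longrightarrow> i \<notin> B \<Longrightarrow> i \<in> {1..s*t} \<Longrightarrow>
    card {C\<in>Cs r B. i \<in> C} = (s*t - t) choose ((r - 1) * t)"
proof -
  assume B: "B \<in> Bs" and i: "i \<notin> B" "i \<in> {1..s*t}"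
  have "{C\<in>Cs r B. i \<in> C} = {C. C \<subseteq> {1..s*t} - B \<and> card C = Suc ((r - 1) * t) \<and> i \<in> C}"
    unfolding Cs_def by auto
  moreover have "i \<in> {1..s*t} - B" using i by simp
  ultimately show ?thesis using card_sub_in[of "{1..s*t} - B" i "(r - 1) * t"] card_PB[OF B] by simp
qed

definition DD where "DD = xi 1 * ((s*t - 1) choose (t - 1)) +
   (\<Sum>r=2..s. xi r * (((s*t - 1) choose (t - 2)) * ((s*t - t + 1) choose ((r - 1) * t + 1))))"
definition UU where "UU = (\<Sum>r=2..s. xi r * (((s*t - 1) choose (t - 1)) * ((s*t - t) choose ((r - 1) * t))))"

lemma sum_dir:
  assumes i: "i \<in> {1..s*t}"
  shows "(\<Sum>d\<in>Dsc. if dirD i d then xi (fst d) else 0) = DD"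
proof -
  have 1: "(\<Sum>A\<in>As. if dirD i (1, {}, A) then xi (fst (1::nat, {}::nat set, A)) else 0)
      = xi 1 * ((s*t - 1) choose (t - 1))"
  proof -
    have "(\<Sum>A\<in>As. if dirD i (1, {}, A) then xi (fst (1::nat, {}::nat set, A)) else 0)
       = (\<Sum>A\<in>As. if i \<in> A then xi 1 else 0)" by (intro sum.cong refl) (simp add: dirD_def)
    also have "\<dots> = card {A\<in>As. i \<in> A} * xi 1" using sum_if_const[OF fin_As] .
    finally show ?thesis using cardAs_in[OF i] by simp
  qed
  have 2: "(\<Sum>B\<in>Bs. \<Sum>C\<in>Cs r B. if dirD i (r, B, C) then xi (fst (r, B, C)) else 0)
      = xi r * (((s*t - 1) choose (t - 2)) * ((s*t - t + 1) choose ((r - 1) * t + 1)))"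
    if r: "r \<in> {2..s}" for r
  proof -
    have "(\<Sum>B\<in>Bs. \<Sum>C\<in>Cs r B. if dirD i (r, B, C) then xi (fst (r, B, C)) else 0)
      = (\<Sum>B\<in>Bs. if i \<in> B then ((s*t - t + 1) choose ((r - 1) * t + 1)) * xi r else 0)"
    proof (rule sum.cong[OF refl])
      fix B assume B: "B \<in> Bs"
      have "(\<Sum>C\<in>Cs r B. if dirD i (r, B, C) then xi (fst (r, B, C)) else 0)
          = (\<Sum>C\<in>Cs r B. if i \<in> B then xi r else 0)" using r by (intro sum.cong refl) (simp add: dirD_def)
      also have "\<dots> = (if i \<in> B then card (Cs r B) * xi r else 0)" by simp
      finally show "(\<Sum>C\<in>Cs r B. if dirD i (r, B, C) then xi (fst (r, B, C)) else 0)
          = (if i \<in> B then ((s*t - t + 1) choose ((r - 1) * t + 1)) * xi r else 0)"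
        using cardCs[OF B] by simp
    qed
    also have "\<dots> = card {B\<in>Bs. i \<in> B} * (((s*t - t + 1) choose ((r - 1) * t + 1)) * xi r)"
      using sum_if_const[OF fin_Bs] .
    finally show ?thesis using cardBs_in[OF i] by simp
  qed
  have 3: "(\<Sum>r\<in>{2..s}. \<Sum>B\<in>Bs. \<Sum>C\<in>Cs r B. if dirD i (r, B, C) then xi (fst (r, B, C)) else 0)
     = (\<Sum>r\<in>{2..s}. xi r * (((s*t - 1) choose (t - 2)) * ((s*t - t + 1) choose ((r - 1) * t + 1))))"
    by (rule sum.cong[OF refl]) (rule 2)
  show ?thesis unfolding G DD_def 1 3 by (rule refl)
qed

lemma sum_up:
  assumes i: "i \<in> {1..s*t}"
  shows "(\<Sum>d\<in>Dsc. if upD i d then xi (fst d) else 0) = UU"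
proof -
  have 1: "(\<Sum>A\<in>As. if upD i (1, {}, A) then xi (fst (1::nat, {}::nat set, A)) else 0) = 0"
    by (simp add: upD_def)
  have 2: "(\<Sum>B\<in>Bs. \<Sum>C\<in>Cs r B. if upD i (r, B, C) then xi (fst (r, B, C)) else 0)
      = xi r * (((s*t - 1) choose (t - 1)) * ((s*t - t) choose ((r - 1) * t)))"
    if r: "r \<in> {2..s}" for r
  proof -
    have "(\<Sum>B\<in>Bs. \<Sum>C\<in>Cs r B. if upD i (r, B, C) then xi (fst (r, B, C)) else 0)
      = (\<Sum>B\<in>Bs. if i \<notin> B then ((s*t - t) choose ((r - 1) * t)) * xi r else 0)"
    proof (rule sum.cong[OF refl])
      fix B assume B: "B \<in> Bs"
      have "(\<Sum>C\<in>Cs r B. if upD i (r, B, C) then xi (fst (r, B, C)) else 0)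
          = (\<Sum>C\<in>Cs r B. if i \<notin> B \<and> i \<in> C then xi r else 0)" using r by (intro sum.cong refl) (simp add: upD_def)
      also have "\<dots> = card {C\<in>Cs r B. i \<notin> B \<and> i \<in> C} * xi r" using sum_if_const[OF fin_Cs] .
      finally show "(\<Sum>C\<in>Cs r B. if upD i (r, B, C) then xi (fst (r, B, C)) else 0)
          = (if i \<notin> B then ((s*t - t) choose ((r - 1) * t)) * xi r else 0)"
        using cardCs_in[OF B _ i] by (cases "i \<in> B") simp_all
    qed
    also have "\<dots> = card {B\<in>Bs. i \<notin> B} * (((s*t - t) choose ((r - 1) * t)) * xi r)"
      using sum_if_const[OF fin_Bs] .
    finally show ?thesis using cardBs_notin[OF i] by simp
  qed
  have 3: "(\<Sum>r\<in>{2..s}. \<Sum>B\<in>Bs. \<Sum>C\<in>Cs r B. if upD i (r, B, C) then xi (fst (r, B, C)) else 0)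
     = (\<Sum>r\<in>{2..s}. xi r * (((s*t - 1) choose (t - 1)) * ((s*t - t) choose ((r - 1) * t))))"
    by (rule sum.cong[OF refl]) (rule 2)
  show ?thesis unfolding G UU_def 1 3 by simp
qed

end


context T8 begin

lemma length_cols: "length cols = DD + 2 * UU"
  and pir_i: "i \<in> {1..s*t} \<Longrightarrow> \<exists>S :: nat \<Rightarrow> nat set.
        (\<forall>j<DD + UU. S j \<subseteq> {..<length cols}) \<and>
        (\<forall>j<DD + UU. \<forall>j'<DD + UU. j \<noteq> j' \<longrightarrow> S j \<inter> S j' = {}) \<and>
        (\<forall>j<DD + UU. basis_vec i \<in> lin_span (\<Union>c\<in>S j. set (cols ! c)))"
proof -
  have main: "length cols = DD + 2 * UU \<and> (\<exists>S :: nat \<Rightarrow> nat set.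
        (\<forall>j<DD + UU. S j \<subseteq> {..<length cols}) \<and>
        (\<forall>j<DD + UU. \<forall>j'<DD + UU. j \<noteq> j' \<longrightarrow> S j \<inter> S j' = {}) \<and>
        (\<forall>j<DD + UU. basis_vec i \<in> lin_span (\<Union>c\<in>S j. set (cols ! c))))"
    if i: "i \<in> {1..s*t}" for i
  proof -
    define n where "n = length cols"
    define Dir where "Dir = {c. c < n \<and> dirD i (desc c)}"
    define Lo where "Lo = {c. c < n \<and> loD i (desc c)}"
    define Up where "Up = {c. c < n \<and> upD i (desc c)}"
    have fin: "finite Dir" "finite Lo" "finite Up" unfolding Dir_def Lo_def Up_def by auto
    have cDir: "card Dir = DD" unfolding Dir_def n_def card_Q sum_dir[OF i] ..
    have cUp: "card Up = UU" unfolding Up_def n_def card_Q sum_up[OF i] ..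
    have du: "\<not> (dirD i d \<and> upD i d)" for d
      by (cases d) (auto simp: dirD_def upD_def)
    have disj: "Dir \<inter> Lo = {}" "Dir \<inter> Up = {}" "Lo \<inter> Up = {}"
      unfolding Dir_def Lo_def Up_def loD_def using du by (blast, blast, blast)
    have all: "{..<n} = Dir \<union> Lo \<union> Up" unfolding Dir_def Lo_def Up_def loD_def by auto
    have fib: "card {a\<in>Lo. keyL (desc a) = K} = card {b\<in>Up. keyU i (desc b) = K}" for K
    proof -
      have "card {a\<in>Lo. keyL (desc a) = K} = card {c. c < length cols \<and> (loD i (desc c) \<and> keyL (desc c) = K)}"
        by (rule arg_cong[where f=card]) (auto simp: Lo_def n_def)
      also have "\<dots> = (\<Sum>d\<in>Dsc. if loD i d \<and> keyL d = K then xi (fst d) else 0)" by (rule card_Q)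
      also have "\<dots> = (\<Sum>d\<in>LK i K. xi (fst d))" unfolding LK_def by (rule sum.inter_filter[OF fin_Dsc, symmetric])
      finally have 1: "card {a\<in>Lo. keyL (desc a) = K} = (\<Sum>d\<in>LK i K. xi (fst d))" .
      have "card {b\<in>Up. keyU i (desc b) = K} = card {c. c < length cols \<and> (upD i (desc c) \<and> keyU i (desc c) = K)}"
        by (rule arg_cong[where f=card]) (auto simp: Up_def n_def)
      also have "\<dots> = (\<Sum>d\<in>Dsc. if upD i d \<and> keyU i d = K then xi (fst d) else 0)" by (rule card_Q)
      also have "\<dots> = (\<Sum>d\<in>UK i K. xi (fst d))" unfolding UK_def by (rule sum.inter_filter[OF fin_Dsc, symmetric])
      finally have 2: "card {b\<in>Up. keyU i (desc b) = K} = (\<Sum>d\<in>UK i K. xi (fst d))" .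
      show ?thesis unfolding 1 2 using fiber_eq[OF i] .
    qed
    obtain g where g: "bij_betw g Lo Up" "\<forall>a\<in>Lo. keyU i (desc (g a)) = keyL (desc a)"
      using fiber_bij[OF fin(2,3), of "\<lambda>a. keyL (desc a)" "\<lambda>b. keyU i (desc b)"] fib by blast
    have gU: "a \<in> Lo \<Longrightarrow> g a \<in> Up" for a using g(1) unfolding bij_betw_def by blast
    have ginj: "inj_on g Lo" using g(1) unfolding bij_betw_def by blast
    have cLo: "card Lo = UU" using bij_betw_same_card[OF g(1)] cUp by simp
    have "card {..<n} = card Dir + card Lo + card Up"
      unfolding all using fin disj by (simp add: card_Un_disjoint Int_Un_distrib2)
    then have nlen: "length cols = DD + 2 * UU" using cDir cLo cUp n_def by simp
    define F1 where "F1 = (\<lambda>c. {c}) ` Dir"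
    define F2 where "F2 = (\<lambda>c. {c, g c}) ` Lo"
    define F where "F = F1 \<union> F2"
    have inj1: "inj_on (\<lambda>c. {c}) Dir" by (rule inj_onI) simp
    have inj2: "inj_on (\<lambda>c. {c, g c}) Lo"
    proof (rule inj_onI)
      fix a b assume ab: "a \<in> Lo" "b \<in> Lo" "{a, g a} = {b, g b}"
      then have "a \<in> {b, g b}" by blast
      moreover have "a \<noteq> g b" using ab gU disj(3) by blast
      ultimately show "a = b" by blast
    qed
    have F12: "F1 \<inter> F2 = {}"
    proof (rule ccontr)
      assume "F1 \<inter> F2 \<noteq> {}"
      then obtain a b where "a \<in> Dir" "b \<in> Lo" "{a} = {b, g b}" unfolding F1_def F2_def by blast
      then have "b = a" by blast
      then show False using \<open>a \<in> Dir\<close> \<open>b \<in> Lo\<close> disj(1) by blast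
    qed
    have cF: "card F = DD + UU" unfolding F_def
      using card_Un_disjoint[of F1 F2] F12 fin card_image[OF inj1] card_image[OF inj2] cDir cLo
      unfolding F1_def F2_def by simp
    have dsc: "c < length cols \<Longrightarrow> desc c \<in> Dsc \<and> cols ! c = colof (desc c)" for c using desc by blast
    have sub: "\<forall>X\<in>F. X \<subseteq> {..<length cols}"
    proof
      fix X assume "X \<in> F"
      then show "X \<subseteq> {..<length cols}" unfolding F_def F1_def F2_def
        using gU unfolding Dir_def Lo_def Up_def n_def by auto
    qed
    have pw: "\<forall>X\<in>F. \<forall>Y\<in>F. X \<noteq> Y \<longrightarrow> X \<inter> Y = {}"
    proof (intro ballI impI)
      fix X Y assume X: "X \<in> F" and Y: "Y \<in> F" and XY: "X \<noteq> Y"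
      show "X \<inter> Y = {}"
      proof (cases "X \<in> F1")
        case True
        then obtain a where a: "a \<in> Dir" "X = {a}" unfolding F1_def by blast
        show ?thesis
        proof (cases "Y \<in> F1")
          case True
          then obtain b where "b \<in> Dir" "Y = {b}" unfolding F1_def by blast
          then show ?thesis using a XY by blast
        next
          case False
          then obtain b where b: "b \<in> Lo" "Y = {b, g b}" using Y unfolding F_def F2_def by blast
          have "a \<noteq> b" "a \<noteq> g b" using a b gU disj by blast+
          then show ?thesis using a b by blast
        qed
      next
        case False
        then obtain a where a: "a \<in> Lo" "X = {a, g a}" using X unfolding F_def F2_def by blast
        show ?thesis
        proof (cases "Y \<in> F1")
          case True
          then obtain b where b: "b \<in> Dir" "Y = {b}" unfolding F1_def by blast
          have "b \<noteq> a" "b \<noteq> g a" using a b gU disj by blast+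
          then show ?thesis using a b by blast
        next
          case False
          then obtain b where b: "b \<in> Lo" "Y = {b, g b}" using Y unfolding F_def F2_def by blast
          have "a \<noteq> b" using a b XY by blast
          then have "g a \<noteq> g b" using ginj a b unfolding inj_on_def by blast
          moreover have "a \<noteq> g b" "b \<noteq> g a" using a b gU disj by blast+
          ultimately show ?thesis using a b \<open>a \<noteq> b\<close> by blast
        qed
      qed
    qed
    have rec: "\<forall>X\<in>F. basis_vec i \<in> lin_span (\<Union>c\<in>X. set (cols ! c))"
    proof
      fix X assume "X \<in> F"
      then consider (a) a where "a \<in> Dir" "X = {a}" | (b) a where "a \<in> Lo" "X = {a, g a}"
        unfolding F_def F1_def F2_def by blast
      then show "basis_vec i \<in> lin_span (\<Union>c\<in>X. set (cols ! c))"
      proof cases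
        case (a a)
        then have a1: "a < length cols" "dirD i (desc a)" unfolding Dir_def n_def by auto
        have "basis_vec i \<in> set (cols ! a)" using rec_dir[of "desc a" i] dsc[OF a1(1)] a1(2) by simp
        then show ?thesis using a(2) by (auto intro: span_base)
      next
        case (b a)
        then have a1: "a < length cols" "loD i (desc a)" unfolding Lo_def n_def by auto
        have ga: "g a < length cols" "upD i (desc (g a))" using gU[OF b(1)] unfolding Up_def n_def by auto
        have k: "keyL (desc a) = keyU i (desc (g a))" using g(2) b(1) by simp
        have "basis_vec i \<in> lin_span (set (colof (desc a) :: (nat \<Rightarrow> 'a) list) \<union> set (colof (desc (g a))))"
          using rec_pair[of "desc a" "desc (g a)" i] dsc[OF a1(1)] dsc[OF ga(1)] a1(2) ga(2) k by blast
        moreover have "(\<Union>c\<in>X. set (cols ! c)) = set (colof (desc a) :: (nat \<Rightarrow> 'a) list) \<union> set (colof (desc (g a)))"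
          using b(2) dsc[OF a1(1)] dsc[OF ga(1)] by auto
        ultimately show ?thesis by simp
      qed
    qed
    have finF: "finite F" unfolding F_def F1_def F2_def using fin by simp
    show ?thesis using nlen pir_from_family[OF finF sub pw rec, of "DD + UU"] cF by simp
  qed
  have "(1::nat) \<in> {1..s*t}" using s2 t2 by (simp add: Suc_le_eq)
  then show "length cols = DD + 2 * UU" using main by blast
  show "i \<in> {1..s*t} \<Longrightarrow> \<exists>S :: nat \<Rightarrow> nat set.
        (\<forall>j<DD + UU. S j \<subseteq> {..<length cols}) \<and>
        (\<forall>j<DD + UU. \<forall>j'<DD + UU. j \<noteq> j' \<longrightarrow> S j \<inter> S j' = {}) \<and>
        (\<forall>j<DD + UU. basis_vec i \<in> lin_span (\<Union>c\<in>S j. set (cols ! c)))" using main by blast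
qed

end


context T8 begin

lemma bA: "(s*t) * ((s*t - 1) choose (t - 1)) = ((s*t) choose (t - 1)) * (s*t - t + 1)"
proof -
  have "(s*t - (t - 1)) * ((s*t) choose (t - 1)) = (s*t) * ((s*t - 1) choose (t - 1))"
    by (rule binomial_absorb_comp)
  moreover have "s*t - (t - 1) = s*t - t + 1" using st_ge t2 by (simp add: Suc_diff_le)
  ultimately show ?thesis by (metis mult.commute)
qed

lemma bB: "(s*t) * ((s*t - 1) choose (t - 2)) = ((s*t) choose (t - 1)) * (t - 1)"
proof -
  have "Suc (t - 2) * ((s*t) choose Suc (t - 2)) = (s*t) * ((s*t - 1) choose (t - 2))"
    by (rule binomial_absorption)
  moreover have "Suc (t - 2) = t - 1" using t2 by simp
  ultimately show ?thesis by (simp add: mult.commute)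
qed

definition betan where "betan = xi 1 * (s*t - t + 1) +
   (\<Sum>r=2..s. (t - 1) * xi r * ((s*t - t + 1) choose ((r - 1) * t + 1)))"
definition gamman where "gamman = (s*t - t + 1) * (\<Sum>r=1..s-1. xi (r + 1) * ((s*t - t) choose (r * t)))"

lemma DD_eq: "(s*t) * DD = ((s*t) choose (t - 1)) * betan"
proof -
  let ?c = "(s*t) choose (t - 1)"
  have 1: "(s*t) * (xi 1 * ((s*t - 1) choose (t - 1))) = ?c * (xi 1 * (s*t - t + 1))"
  proof -
    have "(s*t) * (xi 1 * ((s*t - 1) choose (t - 1))) = xi 1 * ((s*t) * ((s*t - 1) choose (t - 1)))"
      by (rule mult.left_commute)
    also have "\<dots> = xi 1 * (?c * (s*t - t + 1))" unfolding bA ..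
    also have "\<dots> = ?c * (xi 1 * (s*t - t + 1))" by (rule mult.left_commute)
    finally show ?thesis .
  qed
  have 2: "(s*t) * (xi r * (((s*t - 1) choose (t - 2)) * X)) = ?c * ((t - 1) * xi r * X)" for r X
  proof -
    have "(s*t) * (xi r * (((s*t - 1) choose (t - 2)) * X)) = xi r * (((s*t) * ((s*t - 1) choose (t - 2))) * X)"
      by (simp only: mult.assoc mult.left_commute)
    also have "\<dots> = xi r * ((?c * (t - 1)) * X)" unfolding bB ..
    also have "\<dots> = ?c * ((t - 1) * xi r * X)" by (simp only: mult.assoc mult.left_commute mult.commute)
    finally show ?thesis .
  qed
  show ?thesis unfolding DD_def betan_def distrib_left sum_distrib_left 1 2 ..
qed

lemma UU_eq: "(s*t) * UU = ((s*t) choose (t - 1)) * gamman"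
proof -
  let ?c = "(s*t) choose (t - 1)"
  have 2: "(s*t) * (xi r * (((s*t - 1) choose (t - 1)) * X)) = ?c * (s*t - t + 1) * (xi r * X)" for r X
  proof -
    have "(s*t) * (xi r * (((s*t - 1) choose (t - 1)) * X)) = xi r * (((s*t) * ((s*t - 1) choose (t - 1))) * X)"
      by (simp only: mult.assoc mult.left_commute)
    also have "\<dots> = xi r * ((?c * (s*t - t + 1)) * X)" unfolding bA ..
    also have "\<dots> = ?c * (s*t - t + 1) * (xi r * X)" by (simp only: mult.assoc mult.left_commute mult.commute)
    finally show ?thesis .
  qed
  have sh: "(\<Sum>r=2..s. xi r * ((s*t - t) choose ((r - 1) * t))) = (\<Sum>r=1..s-1. xi (r + 1) * ((s*t - t) choose (r * t)))"
  proof -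
    have "{2..s} = {Suc 1..Suc (s - 1)}" using s2 by simp
    then have "(\<Sum>r=2..s. xi r * ((s*t - t) choose ((r - 1) * t))) = (\<Sum>r=1..s-1. xi (Suc r) * ((s*t - t) choose ((Suc r - 1) * t)))"
      by (simp only: sum.shift_bounds_cl_Suc_ivl)
    then show ?thesis by simp
  qed
  have "(s*t) * UU = (\<Sum>r=2..s. ?c * (s*t - t + 1) * (xi r * ((s*t - t) choose ((r - 1) * t))))"
    unfolding UU_def sum_distrib_left 2 ..
  also have "\<dots> = ?c * ((s*t - t + 1) * (\<Sum>r=2..s. xi r * ((s*t - t) choose ((r - 1) * t))))"
    by (simp only: sum_distrib_left mult.assoc)
  also have "\<dots> = ?c * gamman" unfolding gamman_def sh ..
  finally show ?thesis .
qed

lemma ratio: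
  "real (DD + UU) / real (length cols) =
        (let p = s * t;
             \<beta> = real (xi 1 * (p - t + 1)) +
                 (\<Sum>r=2..s. real ((t - 1) * xi r * ((p - t + 1) choose ((r - 1) * t + 1))));
             \<gamma> = real (p - t + 1) * (\<Sum>r=1..s-1. real (xi (r + 1) * ((p - t) choose (r * t))))
         in (\<beta> + \<gamma>) / (\<beta> + 2 * \<gamma>))"
proof -
  define c where "c = real ((s*t) choose (t - 1))"
  define P where "P = real (s*t)"
  have "t - 1 \<le> s * t" using st_ge by linarith
  then have cpos: "c > 0" unfolding c_def by simp
  have Ppos: "P > 0" unfolding P_def using s2 t2 by simp
  have b: "real betan = real (xi 1 * (s*t - t + 1)) +
                 (\<Sum>r=2..s. real ((t - 1) * xi r * ((s*t - t + 1) choose ((r - 1) * t + 1))))"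
    unfolding betan_def of_nat_add of_nat_sum ..
  have g: "real gamman = real (s*t - t + 1) * (\<Sum>r=1..s-1. real (xi (r + 1) * ((s*t - t) choose (r * t))))"
    unfolding gamman_def of_nat_mult of_nat_sum ..
  have bD: "real betan = (P / c) * real DD"
    using arg_cong[OF DD_eq, of real] cpos unfolding P_def c_def of_nat_mult by (simp add: field_simps)
  have gU: "real gamman = (P / c) * real UU"
    using arg_cong[OF UU_eq, of real] cpos unfolding P_def c_def of_nat_mult by (simp add: field_simps)
  have q: "P / c \<noteq> 0" using cpos Ppos by simp
  have "(real betan + real gamman) / (real betan + 2 * real gamman)
      = ((P / c) * real (DD + UU)) / ((P / c) * real (DD + 2 * UU))"
    unfolding bD gU by (simp add: algebra_simps)
  also have "\<dots> = real (DD + UU) / real (DD + 2 * UU)" using q by (rule mult_divide_mult_cancel_left)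
  finally show ?thesis unfolding Let_def length_cols b[symmetric] g[symmetric] by simp
qed

lemma array_code: "is_array_code t (s*t) cols"
  unfolding is_array_code_def
proof
  fix col assume "col \<in> set cols"
  then obtain c where c: "c < length cols" "col = cols ! c" by (metis in_set_conv_nth)
  obtain r B C where dd: "desc c = (r, B, C)" by (cases "desc c") auto
  have d: "(r, B, C) \<in> Dsc" "col = colof (r, B, C)" using desc[OF c(1)] c(2) dd by auto
  have f: "finite B" "finite C" using fin_C[OF d(1)] by auto
  from d(1) show "length col = t \<and> (\<forall>v\<in>set col. \<forall>i. i \<notin> {1..s*t} \<longrightarrow> v i = 0)"
  proof (cases rule: Dsc_cases)
    case 1
    then have col: "col = col1 C" using d(2) by (simp add: colof_def)
    have "length col = t" using col f 1 by (simp add: length_col1)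
    moreover have "\<forall>v\<in>set col. \<forall>i. i \<notin> {1..s*t} \<longrightarrow> v i = 0"
      using col f 1 by (auto simp: set_col1 basis_vec_def)
    ultimately show ?thesis by blast
  next
    case 2
    then have col: "col = colr B C" using d(2) by (simp add: colof_def)
    have "length col = t" using col f 2 t2 by (simp add: length_colr)
    moreover have "\<forall>v\<in>set col. \<forall>i. i \<notin> {1..s*t} \<longrightarrow> v i = 0"
    proof (intro ballI allI impI)
      fix v i assume v: "v \<in> set col" and i: "i \<notin> {1..s*t}"
      then have "v = sumvec C \<or> v \<in> basis_vec ` B" using col f by (simp add: set_colr)
      then show "v i = 0"
      proof
        assume "v = sumvec C"
        moreover have "i \<notin> C" using i 2 by auto
        ultimately show ?thesis using sumvec_val[OF f(2), of i] by simp
      next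
        assume "v \<in> basis_vec ` B"
        then show ?thesis using i 2 by (auto simp: basis_vec_def)
      qed
    qed
    ultimately show ?thesis by blast
  qed
qed

lemma main:
  "is_array_code t (s*t) cols \<and>
    (\<exists>k. is_kPIR (s*t) cols k \<and>
      real k / real (length cols) =
        (let p = s * t;
             \<beta> = real (xi 1 * (p - t + 1)) +
                 (\<Sum>r=2..s. real ((t - 1) * xi r * ((p - t + 1) choose ((r - 1) * t + 1))));
             \<gamma> = real (p - t + 1) * (\<Sum>r=1..s-1. real (xi (r + 1) * ((p - t) choose (r * t))))
         in (\<beta> + \<gamma>) / (\<beta> + 2 * \<gamma>)))"
proof -
  have "is_kPIR (s*t) cols (DD + UU)" unfolding is_kPIR_def using pir_i by blast
  then show ?thesis using array_code ratio by blast
qed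

end

theorem theorem8:
  fixes s t :: nat and \<xi> :: "nat \<Rightarrow> nat"
    and cols :: "(nat \<Rightarrow> 'a::{field,finite}) list list"
  assumes "s \<ge> 2" and "t \<ge> 2"
    and "\<forall>r\<in>{1..s}. \<xi> r > 0"
    and "\<forall>r. 2 \<le> r \<and> r \<le> s - 1 \<longrightarrow>
           ((s*t - t) choose ((r - 1) * t + 1)) * \<xi> r = ((s*t - t) choose (r * t)) * \<xi> (r + 1)"
    and "(s - 1) * \<xi> 1 = ((s*t - t) choose t) * \<xi> 2"
    and "mset cols = theorem8_columns s t \<xi>"
  shows "is_array_code t (s*t) cols \<and>
    (\<exists>k. is_kPIR (s*t) cols k \<and>
      real k / real (length cols) =
        (let p = s * t;
             \<beta> = real (\<xi> 1 * (p - t + 1)) +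
                 (\<Sum>r=2..s. real ((t - 1) * \<xi> r * ((p - t + 1) choose ((r - 1) * t + 1))));
             \<gamma> = real (p - t + 1) * (\<Sum>r=1..s-1. real (\<xi> (r + 1) * ((p - t) choose (r * t))))
         in (\<beta> + \<gamma>) / (\<beta> + 2 * \<gamma>)))"
proof -
  interpret T8 s t \<xi> cols
    by (rule T8.intro) (fact assms(1), fact assms(2), fact assms(4), fact assms(5), fact assms(6))
  show ?thesis by (rule main)
qed


end
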